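(* Let $n\ge1$, $0\le a_1<a_1'\le a_2<a_2'\le\dots\le a_n<a_n'\le1$, $A_i=[a_i,a_i']$, $A=\bigcup_iA_i$, and let $\tau:[0,1]\to[0,1]$ be defined by $\tau x=\alpha_ix+c_i$ for $x\in A_i$ and $\tau x=x$ otherwise, where $\alpha_i>0$ and $\tau(A_i)\subseteq A_i$ for all $i$. Then for every finite signed Borel measure $\mu$ on $[0,1]$: $\|\tau^*\mu\|\le\bigl(n+1+\sum_i\frac1{\alpha_i}\bigr)\|\mu\|$ and $|\mu-\tau^*\mu|\le\frac12\bigl(n+2+\sum_i\frac1{\alpha_i}\bigr)m(A)\,\|\mu\|$.
   Context: $m$ is Lebesgue measure; $\tau^*\mu(B)=\mu(\tau^{-1}B)$. $\|\mu\|:=\sup\{\int\phi'\,d\mu:\phi\in C^1([0,1]),\sup|\phi|\le1\}$ (strong norm) and $|\mu|:=\sup\{\int\phi\,d\mu:\phi$ measurable, $\sup|\phi|\le1\}$ (weak/total variation norm). *)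

theory Defs
  imports "HOL-Analysis.Analysis"
begin

definition space01 :: "real measure" where
  "space01 = restrict_space borel {0..1}"

text \<open>A finite signed Borel measure on [0,1] is represented as a pair (P, N) of finite
  (nonnegative) Borel measures on [0,1], standing for P - N.  Every finite signed measure
  arises this way (Jordan decomposition), and all quantities below depend only on P - N.\<close>
definition signed_meas :: "real measure \<times> real measure \<Rightarrow> bool" where
  "signed_meas \<mu> \<longleftrightarrow> sets (fst \<mu>) = sets space01 \<and> sets (snd \<mu>) = sets space01
     \<and> finite_measure (fst \<mu>) \<and> finite_measure (snd \<mu>)"

definition sint :: "real measure \<times> real measure \<Rightarrow> (real \<Rightarrow> real) \<Rightarrow> real" where
  "sint \<mu> \<phi> = (\<integral>x. \<phi> x \<partial>fst \<mu>) - (\<integral>x. \<phi> x \<partial>snd \<mu>)"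

definition push :: "(real \<Rightarrow> real) \<Rightarrow> real measure \<times> real measure \<Rightarrow> real measure \<times> real measure" where
  "push \<tau> \<mu> = (distr (fst \<mu>) space01 \<tau>, distr (snd \<mu>) space01 \<tau>)"

definition C1_01 :: "(real \<Rightarrow> real) \<Rightarrow> (real \<Rightarrow> real) \<Rightarrow> bool" where
  "C1_01 \<phi> \<phi>' \<longleftrightarrow> (\<forall>x\<in>{0..1}. (\<phi> has_real_derivative \<phi>' x) (at x within {0..1}))
      \<and> continuous_on {0..1} \<phi>'"

definition strong_norm_fun :: "((real \<Rightarrow> real) \<Rightarrow> real) \<Rightarrow> ereal" where
  "strong_norm_fun I = Sup {ereal (I \<phi>') | \<phi> \<phi>'. C1_01 \<phi> \<phi>' \<and> (\<forall>x\<in>{0..1}. \<bar>\<phi> x\<bar> \<le> 1)}"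

definition weak_norm_fun :: "((real \<Rightarrow> real) \<Rightarrow> real) \<Rightarrow> ereal" where
  "weak_norm_fun I = Sup {ereal (I \<phi>) | \<phi>. \<phi> \<in> borel_measurable space01 \<and> (\<forall>x\<in>{0..1}. \<bar>\<phi> x\<bar> \<le> 1)}"

definition strong_norm :: "real measure \<times> real measure \<Rightarrow> ereal" where
  "strong_norm \<mu> = strong_norm_fun (sint \<mu>)"

definition weak_norm :: "real measure \<times> real measure \<Rightarrow> ereal" where
  "weak_norm \<mu> = weak_norm_fun (sint \<mu>)"

end

theory Submission
  imports Defs
begin


lemma space_space01[simp]: "space space01 = {0..1}"
  by (simp add: space01_def space_restrict_space)

lemma center:
  fixes F :: "real \<Rightarrow> real"
  assumes "S \<noteq> {}" "\<forall>x\<in>S. \<forall>y\<in>S. \<bar>F x - F y\<bar> \<le> L"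
  shows "\<exists>c. \<forall>x\<in>S. \<bar>F x - c\<bar> \<le> L/2"
proof -
  obtain x0 where x0: "x0 \<in> S" using assms(1) by blast
  have ba: "bdd_above (F ` S)" using assms(2) x0
    by (intro bdd_aboveI[of _ "F x0 + L"]) (force simp: abs_le_iff)
  have bb: "bdd_below (F ` S)" using assms(2) x0
    by (intro bdd_belowI[of _ "F x0 - L"]) (force simp: abs_le_iff)
  define M where "M = Sup (F ` S)"
  define m where "m = Inf (F ` S)"
  have 1: "F x \<le> M" if "x \<in> S" for x using that ba unfolding M_def by (simp add: cSup_upper)
  have 2: "m \<le> F x" if "x \<in> S" for x using that bb unfolding m_def by (simp add: cInf_lower)
  have 3: "M - L \<le> m"
  proof -
    have "M \<le> F y + L" if "y \<in> S" for y unfolding M_def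
    proof (rule cSup_least)
      show "F ` S \<noteq> {}" using assms(1) by simp
      fix z assume "z \<in> F ` S"
      then obtain x where "x \<in> S" "z = F x" by auto
      with assms(2) that show "z \<le> F y + L" by (force simp: abs_le_iff)
    qed
    then have "M - L \<le> F y" if "y \<in> S" for y using that by force
    then show ?thesis unfolding m_def using assms(1) by (intro cInf_greatest) auto
  qed
  show ?thesis
  proof (intro exI ballI)
    fix x assume x: "x \<in> S"
    from 1[OF x] 2[OF x] 3 show "\<bar>F x - (M+m)/2\<bar> \<le> L/2" by (auto simp: abs_le_iff field_simps)
  qed
qed

lemma sets01: "B \<in> sets space01 \<longleftrightarrow> B \<subseteq> {0..1} \<and> B \<in> sets borel"
  unfolding space01_def by (subst sets_restrict_space_iff) auto

lemma finL: "finite_measure (restrict_space lborel {0..1::real})"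
  by (rule finite_measureI) (simp add: space_restrict_space emeasure_restrict_space)
lemma sL: "sets (restrict_space lborel {0..1::real}) = sets space01"
  unfolding space01_def by (simp add: sets_restrict_space)
lemma mL: "A \<subseteq> {0..1} \<Longrightarrow> measure (restrict_space lborel {0..1::real}) A = measure lborel A"
  by (rule measure_restrict_space) auto

lemma R:
  fixes M :: "real measure"
  assumes M: "finite_measure M" "sets M = sets space01" and B: "B \<in> sets space01" and e: "e > 0"
  shows "\<exists>U. open U \<and> B \<subseteq> U \<and> measure M (U \<inter> {0..1}) \<le> measure M B + e"
proof -
  interpret finite_measure M by (rule M(1))
  have sp: "space M = {0..1}" using sets_eq_imp_space_eq[OF M(2)] by simp
  have "(\<lambda>x::real. x) \<in> borel_measurable space01" unfolding space01_def
    by (rule measurable_restrict_space1) simp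
  then have idm: "(\<lambda>x::real. x) \<in> borel_measurable M" using measurable_cong_sets[OF M(2) refl] by blast
  define M' where "M' = distr M borel (\<lambda>x. x)"
  have sM': "sets M' = sets borel" unfolding M'_def by simp
  have eM': "emeasure M' A = emeasure M (A \<inter> {0..1})" if "A \<in> sets borel" for A
    unfolding M'_def using emeasure_distr[OF idm that] sp by (simp add: Int_commute)
  have spM': "space M' = UNIV" unfolding M'_def by simp
  have fin: "emeasure M' (space M') \<noteq> \<infinity>" using eM'[of UNIV] spM' by (simp add: emeasure_eq_measure)
  have Bb: "B \<in> sets borel" and B01: "B \<subseteq> {0..1}" using B sets01 by auto
  have BM: "B \<in> sets M" using B M(2) by simp
  have "emeasure M' B = (INF U \<in> {U. B \<subseteq> U \<and> open U}. emeasure M' U)"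
    by (rule outer_regular[OF sM' fin Bb])
  moreover have "emeasure M' B < ennreal (measure M B + e)"
    using eM'[OF Bb] B01 e by (simp add: Int_absorb2 emeasure_eq_measure ennreal_less_iff)
  ultimately obtain U where U: "B \<subseteq> U" "open U" "emeasure M' U < ennreal (measure M B + e)"
    by (auto simp: INF_less_iff)
  then have "ennreal (measure M (U \<inter> {0..1})) < ennreal (measure M B + e)"
    using eM'[of U] by (simp add: borel_open emeasure_eq_measure)
  then have "measure M (U \<inter> {0..1}) < measure M B + e"
    by (simp add: ennreal_less_iff)
  with U show ?thesis by (intro exI[of _ U]) auto
qed

lemma step_int:
  fixes M :: "'a measure" and c :: "'j \<Rightarrow> real"
  assumes J: "finite J" and g: "\<And>x. x \<in> space M \<Longrightarrow> g x = (\<Sum>j\<in>J. c j * indicator (E j) x)"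
   and E1: "\<And>j. j \<in> J \<Longrightarrow> E j \<in> sets M" and E2: "\<And>j. j\<in>J \<Longrightarrow> emeasure M (E j) < \<infinity>"
  shows "integral\<^sup>L M g = (\<Sum>j\<in>J. c j * measure M (E j))"
proof -
  have "integral\<^sup>L M g = integral\<^sup>L M (\<lambda>x. \<Sum>j\<in>J. c j * indicator (E j) x)"
    by (rule Bochner_Integration.integral_cong[OF refl]) (simp add: g)
  also have "\<dots> = (\<Sum>j\<in>J. integral\<^sup>L M (\<lambda>x. c j * indicator (E j) x))"
    by (rule Bochner_Integration.integral_sum) (use E1 E2 in \<open>auto intro!: integrable_mult_right\<close>)
  also have "\<dots> = (\<Sum>j\<in>J. c j * measure M (E j))"
    using E1 sets.sets_into_space by (auto simp: Int_absorb2 intro!: sum.cong)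
  finally show ?thesis .
qed

lemma int_bound:
  fixes M :: "'a measure" and h :: "'a \<Rightarrow> real"
  assumes M: "finite_measure M" and h: "h \<in> borel_measurable M" and b: "\<And>x. x \<in> space M \<Longrightarrow> \<bar>h x\<bar> \<le> B"
  shows "\<bar>integral\<^sup>L M h\<bar> \<le> B * measure M (space M)"
proof -
  interpret finite_measure M by (rule M)
  have ih: "integrable M h" using h b by (intro integrable_const_bound[where B=B]) auto
  have "\<bar>integral\<^sup>L M h\<bar> \<le> integral\<^sup>L M (\<lambda>x. \<bar>h x\<bar>)"
    using integral_norm_bound[of M h] by simp
  also have "\<dots> \<le> integral\<^sup>L M (\<lambda>_. B)"
    using ih b by (intro integral_mono) auto
  finally show ?thesis by (simp add: mult.commute)
qed

locale smu =
  fixes P N :: "real measure" and K :: real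
  assumes sP: "sets P = sets space01" and sN: "sets N = sets space01"
  and fP: "finite_measure P" and fN: "finite_measure N"
  and K: "strong_norm (P,N) = ereal K"
begin

lemma spP[simp]: "space P = {0..1}" using sets_eq_imp_space_eq[OF sP] by simp
lemma spN[simp]: "space N = {0..1}" using sets_eq_imp_space_eq[OF sN] by simp

lemma K_nonneg: "0 \<le> K"
proof -
  have "C1_01 (\<lambda>_. 0) (\<lambda>_. 0)" unfolding C1_01_def by auto
  then have "ereal (sint (P,N) (\<lambda>_. 0)) \<le> strong_norm (P,N)"
    unfolding strong_norm_def strong_norm_fun_def by (intro Sup_upper) force
  then show ?thesis using K by (simp add: sint_def)
qed

lemma S:
  assumes C: "C1_01 F f" and B: "\<forall>x\<in>{0..1}. \<bar>F x - c\<bar> \<le> s"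
  shows "sint (P,N) f \<le> s * K"
proof -
  have s0: "0 \<le> s" using B by force
  have main: "sint (P,N) f \<le> t * K" if t: "t > s" for t
  proof -
    have t0: "t > 0" using t s0 by simp
    have "C1_01 (\<lambda>x. (F x - c) / t) (\<lambda>x. f x / t)"
      using C t0 unfolding C1_01_def
      by (auto intro!: derivative_eq_intros continuous_intros)
    moreover have "\<forall>x\<in>{0..1}. \<bar>(F x - c) / t\<bar> \<le> 1"
      using B t t0 by (auto simp: abs_divide divide_le_eq_1)
    ultimately have "ereal (sint (P,N) (\<lambda>x. f x / t)) \<le> strong_norm (P,N)"
      unfolding strong_norm_def strong_norm_fun_def by (intro Sup_upper) blast
    then have "sint (P,N) f / t \<le> K" using K by (simp add: sint_def diff_divide_distrib)
    then show ?thesis using t0 by (simp add: divide_le_eq mult.commute)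
  qed
  show ?thesis
  proof (cases "K = 0")
    case True then show ?thesis using main[of "s+1"] by simp
  next
    case False
    then have Kp: "K > 0" using K_nonneg by simp
    have "sint (P,N) f / K \<le> s"
      by (rule dense_ge) (use main Kp in \<open>auto simp: divide_le_eq\<close>)
    then show ?thesis using Kp by (simp add: divide_le_eq)
  qed
qed

lemma measP: "f \<in> borel_measurable borel \<Longrightarrow> f \<in> borel_measurable P"
  using measurable_cong_sets[OF sP refl] measurable_restrict_space1 unfolding space01_def by blast
lemma measN: "f \<in> borel_measurable borel \<Longrightarrow> f \<in> borel_measurable N"
  using measurable_cong_sets[OF sN refl] measurable_restrict_space1 unfolding space01_def by blast


lemma int_conv:
  fixes f :: "nat \<Rightarrow> 'a \<Rightarrow> real" and C :: real
  assumes M: "finite_measure M" and f: "\<And>k. f k \<in> borel_measurable M" and g: "g \<in> borel_measurable M"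
  and b: "\<And>k x. x \<in> space M \<Longrightarrow> \<bar>f k x\<bar> \<le> C" and lim: "\<And>x. x \<in> space M \<Longrightarrow> (\<lambda>k. f k x) \<longlonglongrightarrow> g x"
  shows "(\<lambda>k. integral\<^sup>L M (f k)) \<longlonglongrightarrow> integral\<^sup>L M g"
proof (rule integral_dominated_convergence[where w="\<lambda>_. C"])
  show "integrable M (\<lambda>_. C)" using M by (rule finite_measure.integrable_const)
qed (use f g b lim in auto)

lemma S_abs:
  assumes C: "C1_01 F f" and B: "\<forall>x\<in>{0..1}. \<bar>F x - c\<bar> \<le> s"
  shows "\<bar>sint (P,N) f\<bar> \<le> s * K"
proof -
  have "C1_01 (\<lambda>x. - F x) (\<lambda>x. - f x)" using C unfolding C1_01_def
    by (auto intro!: derivative_eq_intros continuous_intros)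
  moreover have "\<forall>x\<in>{0..1}. \<bar>- F x - (-c)\<bar> \<le> s" using B by auto
  ultimately have "sint (P,N) (\<lambda>x. - f x) \<le> s * K" by (rule S)
  then have "- sint (P,N) f \<le> s * K" by (simp add: sint_def)
  with S[OF C B] show ?thesis by linarith
qed

lemma D1:
  assumes f: "continuous_on {0..1} f"
  shows "\<bar>sint (P,N) f\<bar> \<le> K / 2 * (LINT x:{0..1}|lborel. \<bar>f x\<bar>)"
proof -
  define F where "F u = integral {0..u} f" for u
  define L where "L = integral {0..1} (\<lambda>x. \<bar>f x\<bar>)"
  have fa: "continuous_on {0..1} (\<lambda>x. \<bar>f x\<bar>)" using f by (intro continuous_intros)
  have C: "C1_01 F f" unfolding C1_01_def F_def
    using integral_has_vector_derivative[OF f] f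
    by (auto simp: has_real_derivative_iff_has_vector_derivative)
  have diff: "\<bar>F y - F x\<bar> \<le> L" if "0 \<le> x" "x \<le> y" "y \<le> 1" for x y
  proof -
    have i01: "f integrable_on {0..y}" using f that
      by (intro integrable_continuous_interval) (auto intro: continuous_on_subset)
    have "F y = F x + integral {x..y} f" unfolding F_def
      using Henstock_Kurzweil_Integration.integral_combine[OF that(1,2) i01] by simp
    moreover have "norm (integral {x..y} f) \<le> integral {x..y} (\<lambda>x. \<bar>f x\<bar>)"
      by (rule Henstock_Kurzweil_Integration.integral_norm_bound_integral)
        (use f fa that in \<open>auto intro!: integrable_continuous_interval elim!: continuous_on_subset\<close>)
    moreover have "integral {x..y} (\<lambda>x. \<bar>f x\<bar>) \<le> L" unfolding L_def
      using fa that
      by (intro integral_subset_le integrable_continuous_interval) (auto intro: continuous_on_subset)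
    ultimately show ?thesis by simp
  qed
  have "\<forall>x\<in>{0..1}. \<forall>y\<in>{0..1}. \<bar>F x - F y\<bar> \<le> L"
  proof (intro ballI)
    fix x y :: real assume "x \<in> {0..1}" "y \<in> {0..1}"
    then show "\<bar>F x - F y\<bar> \<le> L" using diff[of x y] diff[of y x] by (cases "x \<le> y") auto
  qed
  then obtain c where "\<forall>x\<in>{0..1}. \<bar>F x - c\<bar> \<le> L/2" using center[of "{0..1::real}" F L] by auto
  from S_abs[OF C this] have "\<bar>sint (P,N) f\<bar> \<le> K/2 * L" by (simp add: mult.commute)
  moreover have "(LINT x:{0..1}|lborel. \<bar>f x\<bar>) = L" unfolding L_def
    by (rule set_borel_integral_eq_integral(2)[OF borel_integrable_atLeastAtMost'[OF fa]])
  ultimately show ?thesis by (metis mult.commute times_divide_eq_left)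
qed

lemma D2:
  assumes U: "open U"
  shows "\<bar>measure P (U \<inter> {0..1}) - measure N (U \<inter> {0..1})\<bar> \<le> K/2 * measure lborel (U \<inter> {0..1})"
proof -
  define V where "V = U \<inter> {-1<..<2}"
  have V: "open V" using U unfolding V_def by auto
  have VU: "V \<inter> {0..1} = U \<inter> {0..1}" unfolding V_def by auto
  have cV: "closed (-V)" using V by (simp add: closed_Compl)
  have cV2: "-V \<noteq> {}" unfolding V_def by auto
  define f where "f k x = min 1 (real k * infdist x (-V))" for k x
  have fc: "continuous_on UNIV (f k)" for k unfolding f_def by (intro continuous_intros)
  have fm: "f k \<in> borel_measurable borel" for k using fc by (rule borel_measurable_continuous_onI)
  have fb: "\<bar>f k x\<bar> \<le> 1" for k x unfolding f_def by (auto simp: infdist_nonneg)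
  have fabs: "\<bar>f k x\<bar> = f k x" for k x unfolding f_def by (auto simp: infdist_nonneg)
  have lim: "(\<lambda>k. f k x) \<longlonglongrightarrow> indicator V x" for x
  proof (cases "x \<in> V")
    case True
    then have d: "infdist x (-V) > 0" using cV cV2 infdist_pos_not_in_closed by auto
    obtain k0 :: nat where k0: "real k0 > 1 / infdist x (-V)" using reals_Archimedean2 by blast
    have "f k x = 1" if "k \<ge> k0" for k
    proof -
      have "1 < real k0 * infdist x (-V)" using k0 d by (simp add: divide_less_eq)
      also have "\<dots> \<le> real k * infdist x (-V)" using that d by (intro mult_right_mono) auto
      finally show ?thesis unfolding f_def by simp
    qed
    then have "\<forall>k\<ge>k0. f k x = 1" by blast
    then have "eventually (\<lambda>k. f k x = 1) sequentially" by (auto simp: eventually_sequentially)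
    then show ?thesis using True by (simp add: tendsto_eventually)
  next
    case False then show ?thesis by (simp add: f_def)
  qed
  have iV: "indicator V \<in> borel_measurable borel" using V by (simp add: borel_open)
  have lP: "(\<lambda>k. integral\<^sup>L P (f k)) \<longlonglongrightarrow> measure P (U \<inter> {0..1})"
    using int_conv[OF fP measP[OF fm] measP[OF iV], where C=1] fb lim VU by (simp add: inf_commute)
  have lN: "(\<lambda>k. integral\<^sup>L N (f k)) \<longlonglongrightarrow> measure N (U \<inter> {0..1})"
    using int_conv[OF fN measN[OF fm] measN[OF iV], where C=1] fb lim VU by (simp add: inf_commute)
  have lL: "(\<lambda>k. LINT x:{0..1}|lborel. \<bar>f k x\<bar>) \<longlonglongrightarrow> measure lborel (U \<inter> {0..1})"
  proof -
    have "(\<lambda>k. integral\<^sup>L lborel (\<lambda>x. indicator {0..1} x *\<^sub>R \<bar>f k x\<bar>))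
          \<longlonglongrightarrow> integral\<^sup>L lborel (\<lambda>x. indicator {0..1} x *\<^sub>R indicator V x)"
    proof (rule integral_dominated_convergence[where w="indicator {0..1}"])
      show "AE x in lborel. (\<lambda>k. indicator {0..1} x *\<^sub>R \<bar>f k x\<bar>) \<longlonglongrightarrow> indicator {0..1} x *\<^sub>R indicator V x"
        using lim by (intro AE_I2 tendsto_scaleR tendsto_const) (simp add: fabs)
      show "AE x in lborel. norm (indicator {0..1} x *\<^sub>R \<bar>f k x\<bar>) \<le> (indicator {0..1} x :: real)" for k
        using fb by (intro AE_I2) (auto simp: indicator_def)
      show "(\<lambda>x. indicator {0..1} x *\<^sub>R (indicator V x :: real)) \<in> borel_measurable lborel"
        unfolding measurable_cong_sets[OF sets_lborel refl]
        apply (rule borel_measurable_scaleR)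
        apply (rule borel_measurable_indicator) apply simp
        apply (rule borel_measurable_indicator) using V by (simp add: borel_open)
    qed (use fm in auto)
    moreover have "(\<lambda>x. indicator {0..1} x *\<^sub>R indicator V x) = (indicator (U \<inter> {0..1}) :: real \<Rightarrow> real)"
    proof
      fix x :: real
      have "x \<in> V \<and> x \<in> {0..1} \<longleftrightarrow> x \<in> U \<inter> {0..1}" using VU by blast
      then show "indicator {0..1} x *\<^sub>R indicator V x = (indicator (U \<inter> {0..1}) x :: real)"
        unfolding indicator_def by auto
    qed
    ultimately show ?thesis by (simp add: set_lebesgue_integral_def)
  qed
  have le: "\<bar>sint (P,N) (f k)\<bar> \<le> K / 2 * (LINT x:{0..1}|lborel. \<bar>f k x\<bar>)" for k
    using D1[of "f k"] fc by (auto intro: continuous_on_subset)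
  have l1: "(\<lambda>k. \<bar>sint (P,N) (f k)\<bar>) \<longlonglongrightarrow> \<bar>measure P (U \<inter> {0..1}) - measure N (U \<inter> {0..1})\<bar>"
    unfolding sint_def fst_conv snd_conv by (intro tendsto_rabs tendsto_diff lP lN)
  have l2: "(\<lambda>k. K / 2 * (LINT x:{0..1}|lborel. \<bar>f k x\<bar>)) \<longlonglongrightarrow> K/2 * measure lborel (U \<inter> {0..1})"
    by (intro tendsto_mult_left lL)
  show ?thesis by (rule LIMSEQ_le[OF l1 l2]) (use le in auto)
qed

lemma D3:
  assumes B: "B \<in> sets space01"
  shows "\<bar>measure P B - measure N B\<bar> \<le> K/2 * measure lborel B"
proof (rule field_le_epsilon)
  fix e :: real assume e: "e > 0"
  define d where "d = e / (K/2 + 2)"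
  have Kn: "0 \<le> K" by (rule K_nonneg)
  have d: "d > 0" unfolding d_def using e Kn by simp
  have "(K/2+2) * d = e" unfolding d_def using Kn by simp
  then have "K/2 * d + 2 * d = e" by (simp add: distrib_right)
  then have de: "K/2 * d + d \<le> e" using d by linarith
  obtain U1 where U1: "open U1" "B \<subseteq> U1" "measure P (U1 \<inter> {0..1}) \<le> measure P B + d"
    using R[OF fP sP B d] by blast
  obtain U2 where U2: "open U2" "B \<subseteq> U2" "measure N (U2 \<inter> {0..1}) \<le> measure N B + d"
    using R[OF fN sN B d] by blast
  obtain U3 where U3: "open U3" "B \<subseteq> U3"
     "measure (restrict_space lborel {0..1}) (U3 \<inter> {0..1}) \<le> measure (restrict_space lborel {0..1}) B + d"
    using R[OF finL sL B d] by blast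
  define U where "U = U1 \<inter> U2 \<inter> U3"
  have U: "open U" unfolding U_def using U1 U2 U3 by auto
  have B01: "B \<subseteq> {0..1}" "B \<in> sets borel" using B sets01 by auto
  have BU: "B \<subseteq> U \<inter> {0..1}" unfolding U_def using U1 U2 U3 B01 by auto
  have Us: "U \<inter> {0..1} \<in> sets space01" "U1 \<inter> {0..1} \<in> sets space01" "U2 \<inter> {0..1} \<in> sets space01"
     "U3 \<inter> {0..1} \<in> sets space01"
    using U U1 U2 U3 by (auto simp: sets01 borel_open)
  have Bs: "B \<in> sets space01" by (rule B)
  have a1: "measure P B \<le> measure P (U \<inter> {0..1})"
    using finite_measure.finite_measure_mono[OF fP BU] Us sP by simp
  have s1: "U \<inter> {0..1} \<subseteq> U1 \<inter> {0..1}" "U \<inter> {0..1} \<subseteq> U2 \<inter> {0..1}"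
    "U \<inter> {0..1} \<subseteq> U3 \<inter> {0..1}" unfolding U_def by auto
  have a2: "measure P (U \<inter> {0..1}) \<le> measure P B + d"
    using finite_measure.finite_measure_mono[OF fP s1(1)] Us sP U1 by simp
  have b1: "measure N B \<le> measure N (U \<inter> {0..1})"
    using finite_measure.finite_measure_mono[OF fN BU] Us sN by simp
  have b2: "measure N (U \<inter> {0..1}) \<le> measure N B + d"
    using finite_measure.finite_measure_mono[OF fN s1(2)] Us sN U2 by simp
  have c2: "measure lborel (U \<inter> {0..1}) \<le> measure lborel B + d"
  proof -
    have "measure (restrict_space lborel {0..1}) (U \<inter> {0..1}) \<le> measure (restrict_space lborel {0..1}) (U3 \<inter> {0..1})"
      using finite_measure.finite_measure_mono[OF finL s1(3)] Us(4) sL by blast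
    then show ?thesis using U3(3) mL[OF inf_le2[of U]] mL[OF inf_le2[of U3]] mL[OF B01(1)]
      by linarith
  qed
  have D: "\<bar>measure P (U \<inter> {0..1}) - measure N (U \<inter> {0..1})\<bar> \<le> K/2 * measure lborel (U \<inter> {0..1})"
    by (rule D2[OF U])
  have "K/2 * measure lborel (U \<inter> {0..1}) \<le> K/2 * (measure lborel B + d)"
    using c2 Kn by (intro mult_left_mono) auto
  moreover have "K/2 * (measure lborel B + d) = K/2 * measure lborel B + K/2 * d"
    by (simp add: distrib_left)
  ultimately have E: "K/2 * measure lborel (U \<inter> {0..1}) \<le> K/2 * measure lborel B + K/2 * d" by simp
  have D1': "measure P (U \<inter> {0..1}) - measure N (U \<inter> {0..1}) \<le> K/2 * measure lborel (U \<inter> {0..1})"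
   and D2': "measure N (U \<inter> {0..1}) - measure P (U \<inter> {0..1}) \<le> K/2 * measure lborel (U \<inter> {0..1})"
    using D by (simp_all only: abs_le_iff) linarith+
  have "measure P B - measure N B \<le> K/2 * measure lborel B + e"
    using a1 b2 D1' E de by linarith
  moreover have "measure N B - measure P B \<le> K/2 * measure lborel B + e"
    using b1 a2 D2' E de by linarith
  ultimately show "\<bar>measure P B - measure N B\<bar> \<le> K/2 * measure lborel B + e"
    by (intro abs_leI) linarith+
qed

lemma D4k:
  fixes f :: "real \<Rightarrow> real"
  assumes fm: "f \<in> borel_measurable space01" and fb: "\<And>x. x \<in> {0..1} \<Longrightarrow> \<bar>f x\<bar> \<le> 1"
  shows "\<bar>sint (P,N) f\<bar> \<le> K/2 * (LINT x:{0..1}|lborel. \<bar>f x\<bar>)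
           + (K/2 + measure P {0..1} + measure N {0..1}) / real (Suc m)"
proof -
  define q where "q = real (Suc m)"
  have q1: "q \<ge> 1" unfolding q_def by simp
  define g where "g x = real_of_int \<lfloor>q * f x\<rfloor> / q" for x
  define J where "J = {- int (Suc m)..int (Suc m)}"
  define E where "E j = {x \<in> {0..1}. \<lfloor>q * f x\<rfloor> = j}" for j
  have J: "finite J" unfolding J_def by simp
  have fl: "\<lfloor>q * f x\<rfloor> \<in> J" if x: "x \<in> {0..1}" for x
  proof -
    have "-1 \<le> f x" "f x \<le> 1" using fb[OF x] by auto
    then have "q * (-1) \<le> q * f x" "q * f x \<le> q * 1" using q1 by (intro mult_left_mono; simp)+
    then have "- q \<le> q * f x" "q * f x \<le> q" by simp_all
    moreover have e1: "(of_int (- int (Suc m)) :: real) = - q" and e2: "(of_int (int (Suc m)) :: real) = q"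
      by (simp_all add: q_def)
    ultimately have "of_int (- int (Suc m)) \<le> q * f x" "q * f x < of_int (int (Suc m)) + 1"
      unfolding e1 e2 by linarith+
    then have "- int (Suc m) \<le> \<lfloor>q * f x\<rfloor>" "\<lfloor>q * f x\<rfloor> \<le> int (Suc m)"
      by (simp_all only: le_floor_iff floor_le_iff)
    then show ?thesis unfolding J_def by simp
  qed
  have gd: "\<bar>f x - g x\<bar> \<le> 1 / q" for x
  proof -
    have h: "f x - g x = (q * f x - of_int \<lfloor>q * f x\<rfloor>) / q" unfolding g_def using q1
      by (simp add: field_simps)
    have a: "0 \<le> q * f x - of_int \<lfloor>q * f x\<rfloor>" "q * f x - of_int \<lfloor>q * f x\<rfloor> \<le> 1"
      by linarith+
    have b: "0 \<le> (q * f x - of_int \<lfloor>q * f x\<rfloor>) / q" using a q1 by simp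
    have c: "(q * f x - of_int \<lfloor>q * f x\<rfloor>) / q \<le> 1 / q" using a q1 by (intro divide_right_mono) auto
    show ?thesis unfolding h using b c by linarith
  qed
  have fm1: "(\<lambda>x. q * f x) \<in> borel_measurable space01" using fm by simp
  have flm: "(\<lambda>x. \<lfloor>q * f x\<rfloor>) \<in> measurable space01 (count_space UNIV)"
    using measurable_compose[OF fm1 measurable_real_floor] by (simp add: o_def)
  have Em: "E j \<in> sets space01" for j
  proof -
    have "E j = (\<lambda>x. \<lfloor>q * f x\<rfloor>) -` {j} \<inter> space space01" unfolding E_def by auto
    then show ?thesis using measurable_sets[OF flm, of "{j}"] by simp
  qed
  have E01: "E j \<subseteq> {0..1}" for j unfolding E_def by auto
  have gm: "g \<in> borel_measurable space01" unfolding g_def using fm by simp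
  have ind: "indicator (E j) x = (if \<lfloor>q * f x\<rfloor> = j then 1 else 0 :: real)" if "x \<in> {0..1}" for x j
    using that unfolding E_def by (auto simp: indicator_def)
  have gsum: "g x = (\<Sum>j\<in>J. (of_int j / q) * indicator (E j) x)" if x: "x \<in> {0..1}" for x
  proof -
    have "(\<Sum>j\<in>J. (of_int j / q) * indicator (E j) x) = (\<Sum>j\<in>J. if \<lfloor>q * f x\<rfloor> = j then of_int j / q else 0)"
      using ind[OF x] by (intro sum.cong) auto
    also have "\<dots> = g x" unfolding g_def by (subst sum.delta'[OF J]) (use fl[OF x] in simp)
    finally show ?thesis by simp
  qed
  have gsum2: "indicator {0..1} x *\<^sub>R \<bar>g x\<bar> = (\<Sum>j\<in>J. (\<bar>of_int j\<bar> / q) * indicator (E j) x)" for x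
  proof (cases "x \<in> {0..1}")
    case True
    have "(\<Sum>j\<in>J. (\<bar>of_int j\<bar> / q) * indicator (E j) x) = (\<Sum>j\<in>J. if \<lfloor>q * f x\<rfloor> = j then \<bar>of_int j\<bar> / q else 0)"
      using ind[OF True] by (intro sum.cong) auto
    also have "\<dots> = \<bar>g x\<bar>" unfolding g_def
      by (subst sum.delta'[OF J]) (use fl[OF True] q1 in \<open>simp add: abs_divide\<close>)
    finally show ?thesis using True by simp
  next
    case False
    then have "x \<notin> E j" for j using E01 by blast
    then show ?thesis using False by simp
  qed
  have finP: "emeasure P (E j) < \<infinity>" for j using finite_measure.emeasure_finite[OF fP] by (simp add: top.not_eq_extremum)
  have finN: "emeasure N (E j) < \<infinity>" for j using finite_measure.emeasure_finite[OF fN] by (simp add: top.not_eq_extremum)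
  have finL: "emeasure lborel (E j) < \<infinity>" for j
  proof -
    have "E j \<in> sets borel" using Em sets01 by auto
    then have "emeasure lborel (E j) \<le> emeasure lborel {0..1::real}"
      using E01 by (intro emeasure_mono) auto
    then show ?thesis by (simp add: le_less_trans)
  qed
  have iP: "integral\<^sup>L P g = (\<Sum>j\<in>J. (of_int j / q) * measure P (E j))"
    by (rule step_int[OF J]) (use gsum Em sP finP in auto)
  have iN: "integral\<^sup>L N g = (\<Sum>j\<in>J. (of_int j / q) * measure N (E j))"
    by (rule step_int[OF J]) (use gsum Em sN finN in auto)
  have iL: "(LINT x:{0..1}|lborel. \<bar>g x\<bar>) = (\<Sum>j\<in>J. (\<bar>of_int j\<bar> / q) * measure lborel (E j))"
    unfolding set_lebesgue_integral_def
    by (rule step_int[OF J]) (use gsum2 Em sets01 finL in auto)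
  have "\<bar>sint (P,N) g\<bar> = \<bar>\<Sum>j\<in>J. (of_int j / q) * (measure P (E j) - measure N (E j))\<bar>"
    unfolding sint_def fst_conv snd_conv iP iN by (simp add: sum_subtractf right_diff_distrib)
  also have "\<dots> \<le> (\<Sum>j\<in>J. \<bar>(of_int j / q) * (measure P (E j) - measure N (E j))\<bar>)"
    by (rule sum_abs)
  also have "\<dots> \<le> (\<Sum>j\<in>J. (\<bar>of_int j\<bar> / q) * (K/2 * measure lborel (E j)))"
  proof (rule sum_mono)
    fix j assume "j \<in> J"
    have "\<bar>(of_int j / q) * (measure P (E j) - measure N (E j))\<bar>
        = (\<bar>of_int j\<bar> / q) * \<bar>measure P (E j) - measure N (E j)\<bar>" using q1 by (simp add: abs_mult)
    also have "\<dots> \<le> (\<bar>of_int j\<bar> / q) * (K/2 * measure lborel (E j))"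
      using D3[OF Em] q1 by (intro mult_left_mono) auto
    finally show "\<bar>(of_int j / q) * (measure P (E j) - measure N (E j))\<bar> \<le> (\<bar>of_int j\<bar> / q) * (K/2 * measure lborel (E j))" .
  qed
  also have "\<dots> = K/2 * (LINT x:{0..1}|lborel. \<bar>g x\<bar>)"
    unfolding iL sum_distrib_left by (intro sum.cong) (auto simp: mult_ac)
  finally have gK: "\<bar>sint (P,N) g\<bar> \<le> K/2 * (LINT x:{0..1}|lborel. \<bar>g x\<bar>)" .
  have fP': "f \<in> borel_measurable P" "g \<in> borel_measurable P" using fm gm measurable_cong_sets[OF sP refl] by auto
  have fN': "f \<in> borel_measurable N" "g \<in> borel_measurable N" using fm gm measurable_cong_sets[OF sN refl] by auto
  have gb: "\<bar>g x\<bar> \<le> 2" if "x \<in> {0..1}" for x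
  proof -
    have "1 / q \<le> 1" using q1 by simp
    then show ?thesis using gd[of x] fb[OF that] by linarith
  qed
  have intP: "integrable P f" "integrable P g"
    by (rule finite_measure.integrable_const_bound[OF fP _ fP'(1), where B=1], rule AE_I2, use fb in simp)
       (rule finite_measure.integrable_const_bound[OF fP _ fP'(2), where B=2], rule AE_I2, use gb in simp)
  have intN: "integrable N f" "integrable N g"
    by (rule finite_measure.integrable_const_bound[OF fN _ fN'(1), where B=1], rule AE_I2, use fb in simp)
       (rule finite_measure.integrable_const_bound[OF fN _ fN'(2), where B=2], rule AE_I2, use gb in simp)
  have dP: "\<bar>integral\<^sup>L P f - integral\<^sup>L P g\<bar> \<le> 1/q * measure P {0..1}"
    using int_bound[OF fP, of "\<lambda>x. f x - g x" "1/q"] fP' gd intP by (simp add: integral_diff)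
  have dN: "\<bar>integral\<^sup>L N f - integral\<^sup>L N g\<bar> \<le> 1/q * measure N {0..1}"
    using int_bound[OF fN, of "\<lambda>x. f x - g x" "1/q"] fN' gd intN by (simp add: integral_diff)
  have sfg: "\<bar>sint (P,N) f\<bar> \<le> \<bar>sint (P,N) g\<bar> + (measure P {0..1} + measure N {0..1}) / q"
    using dP dN unfolding sint_def fst_conv snd_conv by (simp add: add_divide_distrib abs_le_iff) linarith
  have mf: "(\<lambda>x. indicator {0..1} x *\<^sub>R \<bar>f x\<bar>) \<in> borel_measurable (lborel::real measure)"
  proof -
    have "(\<lambda>x. \<bar>f x\<bar>) \<in> borel_measurable space01" using fm by (rule borel_measurable_abs)
    then show ?thesis unfolding space01_def
      by (subst (asm) borel_measurable_restrict_space_iff) auto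
  qed
  have mg: "(\<lambda>x. indicator {0..1} x *\<^sub>R \<bar>g x\<bar>) \<in> borel_measurable (lborel::real measure)"
  proof -
    have "(\<lambda>x. \<bar>g x\<bar>) \<in> borel_measurable space01" using gm by (rule borel_measurable_abs)
    then show ?thesis unfolding space01_def
      by (subst (asm) borel_measurable_restrict_space_iff) auto
  qed
  have i01: "integrable lborel (indicator {0..1::real} :: real \<Rightarrow> real)" by simp
  have if1: "integrable lborel (\<lambda>x. indicator {0..1} x *\<^sub>R \<bar>f x\<bar>)"
    by (rule Bochner_Integration.integrable_bound[OF i01 mf]) (use fb in \<open>auto simp: indicator_def\<close>)
  have ig: "integrable lborel (\<lambda>x. indicator {0..1} x *\<^sub>R \<bar>g x\<bar>)"
    by (rule Bochner_Integration.integrable_bound[OF integrable_mult_right[OF i01, of 2] mg]) (use gb in \<open>auto simp: indicator_def\<close>)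
  have "(LINT x:{0..1}|lborel. \<bar>g x\<bar>) \<le> integral\<^sup>L lborel (\<lambda>x. indicator {0..1} x *\<^sub>R \<bar>f x\<bar> + indicator {0..1} x / q)"
    unfolding set_lebesgue_integral_def
  proof (rule integral_mono[OF ig])
    show "integrable lborel (\<lambda>x. indicator {0..1} x *\<^sub>R \<bar>f x\<bar> + indicator {0..1} x / q)"
      using if1 i01 by (intro Bochner_Integration.integrable_add integrable_divide_zero) auto
    fix x :: real
    show "indicator {0..1} x *\<^sub>R \<bar>g x\<bar> \<le> indicator {0..1} x *\<^sub>R \<bar>f x\<bar> + indicator {0..1} x / q"
      using gd[of x] by (auto simp: indicator_def)
  qed
  also have "\<dots> = (LINT x:{0..1}|lborel. \<bar>f x\<bar>) + 1 / q"
    unfolding set_lebesgue_integral_def using if1 i01 by (simp add: Bochner_Integration.integral_add)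
  finally have gL: "(LINT x:{0..1}|lborel. \<bar>g x\<bar>) \<le> (LINT x:{0..1}|lborel. \<bar>f x\<bar>) + 1 / q" .
  have "K/2 * (LINT x:{0..1}|lborel. \<bar>g x\<bar>) \<le> K/2 * ((LINT x:{0..1}|lborel. \<bar>f x\<bar>) + 1 / q)"
    using gL K_nonneg by (intro mult_left_mono) auto
  then show ?thesis using sfg gK unfolding q_def[symmetric]
    by (simp add: add_divide_distrib distrib_left)
qed

lemma D4:
  fixes f :: "real \<Rightarrow> real"
  assumes fm: "f \<in> borel_measurable space01" and fb: "\<And>x. x \<in> {0..1} \<Longrightarrow> \<bar>f x\<bar> \<le> 1"
  shows "\<bar>sint (P,N) f\<bar> \<le> K/2 * (LINT x:{0..1}|lborel. \<bar>f x\<bar>)"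
proof (rule field_le_epsilon)
  fix e :: real assume e: "e > 0"
  define C where "C = K/2 + measure P {0..1} + measure N {0..1}"
  have C: "C \<ge> 0" unfolding C_def using K_nonneg by simp
  obtain m :: nat where m: "C / e < real (Suc m)"
    using reals_Archimedean2[of "C / e"] by (metis less_Suc_eq of_nat_Suc of_nat_less_iff order_less_trans)
  then have "C / real (Suc m) \<le> e" using e C by (simp add: divide_less_eq mult.commute less_imp_le)
  with D4k[OF fm fb, of m] show "\<bar>sint (P,N) f\<bar> \<le> K/2 * (LINT x:{0..1}|lborel. \<bar>f x\<bar>) + e"
    unfolding C_def by linarith
qed

end



locale tdata =
  fixes n :: nat and a a' \<alpha> c :: "nat \<Rightarrow> real" and \<tau> :: "real \<Rightarrow> real"
  assumes n: "n \<ge> 1"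
    and a0: "0 \<le> a 1"
    and aa': "\<forall>i\<in>{1..n}. a i < a' i"
    and a'a: "\<forall>i\<in>{1..<n}. a' i \<le> a (Suc i)"
    and a1: "a' n \<le> 1"
    and alpha_pos: "\<forall>i\<in>{1..n}. \<alpha> i > 0"
    and tau_A: "\<forall>x\<in>{0..1}. x \<in> (\<Union>i\<in>{1..n}. {a i..a' i}) \<longrightarrow>
                   (\<exists>i\<in>{1..n}. x \<in> {a i..a' i} \<and> \<tau> x = \<alpha> i * x + c i)"
    and tau_id: "\<forall>x\<in>{0..1}. x \<notin> (\<Union>i\<in>{1..n}. {a i..a' i}) \<longrightarrow> \<tau> x = x"
    and inv: "\<forall>i\<in>{1..n}. \<forall>x\<in>{a i..a' i}. \<alpha> i * x + c i \<in> {a i..a' i}"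
begin

lemma ord_aux: "1 \<le> i \<Longrightarrow> i + Suc d \<le> n \<Longrightarrow> a' i \<le> a (i + Suc d)"
proof (induction d)
  case 0 then show ?case using a'a by auto
next
  case (Suc d)
  then have "a' i \<le> a (i + Suc d)" by simp
  also have "a (i + Suc d) < a' (i + Suc d)" using aa' Suc.prems by auto
  also have "a' (i + Suc d) \<le> a (Suc (i + Suc d))" using a'a Suc.prems by auto
  finally show ?case by simp
qed

lemma ord: "i \<in> {1..n} \<Longrightarrow> j \<in> {1..n} \<Longrightarrow> i < j \<Longrightarrow> a' i \<le> a j"
  using ord_aux[of i "j - i - 1"] by auto

lemma a_range: "i \<in> {1..n} \<Longrightarrow> 0 \<le> a i \<and> a i < a' i \<and> a' i \<le> 1"
proof -
  assume i: "i \<in> {1..n}"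
  have "a 1 \<le> a i"
  proof (cases "i = 1")
    case False then have "a 1 < a' 1" "a' 1 \<le> a i" using aa' n ord[of 1 i] i by auto
    then show ?thesis by simp
  qed simp
  moreover have "a' i \<le> a' n"
  proof (cases "i = n")
    case False then have "a' i \<le> a n" "a n < a' n" using aa' n ord[of i n] i by auto
    then show ?thesis by simp
  qed simp
  ultimately show ?thesis using a0 a1 aa' i by auto
qed

lemma disj: "i \<in> {1..n} \<Longrightarrow> j \<in> {1..n} \<Longrightarrow> u \<in> {a i<..<a' i} \<Longrightarrow> u \<in> {a j..a' j} \<Longrightarrow> j = i"
proof (rule ccontr)
  assume i: "i \<in> {1..n}" and j: "j \<in> {1..n}" and u: "u \<in> {a i<..<a' i}" "u \<in> {a j..a' j}" and ne: "j \<noteq> i"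
  show False
  proof (cases "j < i")
    case True then show False using ord[OF j i] u by auto
  next
    case False then have "i < j" using ne by simp
    then show False using ord[OF i j] u by auto
  qed
qed

lemma tau_range: "x \<in> {0..1} \<Longrightarrow> \<tau> x \<in> {0..1}"
proof -
  assume x: "x \<in> {0..1}"
  show ?thesis
  proof (cases "x \<in> (\<Union>i\<in>{1..n}. {a i..a' i})")
    case True
    then obtain i where i: "i \<in> {1..n}" "x \<in> {a i..a' i}" "\<tau> x = \<alpha> i * x + c i" using tau_A x by blast
    then have "\<tau> x \<in> {a i..a' i}" using inv by auto
    then show ?thesis using a_range[OF i(1)] by auto
  next
    case False then show ?thesis using tau_id x by auto
  qed
qed

definition S :: "real set" where "S = {0,1} \<union> a ` {1..n} \<union> a' ` {1..n}"

lemma S_fin: "finite S" unfolding S_def by auto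

lemma tau_int: "i \<in> {1..n} \<Longrightarrow> u \<in> {a i<..<a' i} \<Longrightarrow> \<tau> u = \<alpha> i * u + c i"
proof -
  assume i: "i \<in> {1..n}" and u: "u \<in> {a i<..<a' i}"
  have u01: "u \<in> {0..1}" using a_range[OF i] u by auto
  then obtain j where j: "j \<in> {1..n}" "u \<in> {a j..a' j}" "\<tau> u = \<alpha> j * u + c j" using tau_A u i by fastforce
  with disj[OF i j(1) u j(2)] show ?thesis by simp
qed

lemma tau_out: "u \<in> {0..1} \<Longrightarrow> u \<notin> S \<Longrightarrow> (\<forall>i\<in>{1..n}. u \<notin> {a i<..<a' i}) \<Longrightarrow> \<tau> u = u"
proof -
  assume u: "u \<in> {0..1}" "u \<notin> S" "\<forall>i\<in>{1..n}. u \<notin> {a i<..<a' i}"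
  have "u \<notin> (\<Union>i\<in>{1..n}. {a i..a' i})"
  proof
    assume "u \<in> (\<Union>i\<in>{1..n}. {a i..a' i})"
    then obtain i where i: "i \<in> {1..n}" "u \<in> {a i..a' i}" by blast
    moreover have "u \<noteq> a i" "u \<noteq> a' i" using u(2) i(1) unfolding S_def by auto
    ultimately have "u \<in> {a i<..<a' i}" by auto
    then show False using u(3) i(1) by blast
  qed
  then show ?thesis using tau_id u by auto
qed

definition tt :: "real \<Rightarrow> real" where
  "tt x = x + (\<Sum>i\<in>{1..n}. indicator {a i<..<a' i} x * ((\<alpha> i - 1) * x + c i))"

lemma tt_eq: "u \<in> {0..1} \<Longrightarrow> u \<notin> S \<Longrightarrow> \<tau> u = tt u"
proof -
  assume u: "u \<in> {0..1}" "u \<notin> S"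
  show ?thesis
  proof (cases "\<exists>i\<in>{1..n}. u \<in> {a i<..<a' i}")
    case True
    then obtain i where i: "i \<in> {1..n}" "u \<in> {a i<..<a' i}" by blast
    have "(\<Sum>j\<in>{1..n}. indicator {a j<..<a' j} u * ((\<alpha> j - 1) * u + c j))
        = (\<Sum>j\<in>{1..n}. if j = i then (\<alpha> i - 1) * u + c i else 0)"
    proof (rule sum.cong[OF refl])
      fix j assume j: "j \<in> {1..n}"
      show "indicator {a j<..<a' j} u * ((\<alpha> j - 1) * u + c j) = (if j = i then (\<alpha> i - 1) * u + c i else 0)"
      proof (cases "j = i")
        case True then show ?thesis using i(2) by simp
      next
        case False
        have "u \<notin> {a j<..<a' j}"
        proof
          assume "u \<in> {a j<..<a' j}"
          then have "u \<in> {a j..a' j}" by auto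
          from disj[OF i(1) j i(2) this] False show False by simp
        qed
        then show ?thesis using False by simp
      qed
    qed
    also have "\<dots> = (\<alpha> i - 1) * u + c i" using i(1) by simp
    finally show ?thesis unfolding tt_def using tau_int[OF i] by (simp add: algebra_simps)
  next
    case False
    then have "(\<Sum>j\<in>{1..n}. indicator {a j<..<a' j} u * ((\<alpha> j - 1) * u + c j)) = 0"
      by (intro sum.neutral) (auto simp: indicator_def)
    then show ?thesis unfolding tt_def using tau_out[OF u] False by simp
  qed
qed

lemma tau_meas: "\<tau> \<in> measurable space01 space01"
proof -
  have "tt \<in> borel_measurable borel" unfolding tt_def by measurable
  then have "tt \<in> borel_measurable space01" unfolding space01_def by (rule measurable_restrict_space1)
  then have "\<tau> \<in> borel_measurable space01"
  proof (rule measurable_discrete_difference[where X="S"])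
    show "countable S" using S_fin by (rule countable_finite)
    show "{x} \<in> sets space01" if "x \<in> S" for x
    proof -
      have "x \<in> {0..1}" using that a_range unfolding S_def by fastforce
      then show ?thesis by (simp add: sets01)
    qed
  qed (auto simp: tt_eq)
  moreover have "\<tau> \<in> space space01 \<rightarrow> {0..1}" using tau_range by auto
  ultimately have "\<tau> \<in> measurable space01 (restrict_space borel {0..1})"
    by (intro measurable_restrict_space2)
  then show ?thesis by (simp add: space01_def)
qed

definition cl :: "real \<Rightarrow> real" where "cl u = max 0 (min 1 u)"
definition ci :: "nat \<Rightarrow> real \<Rightarrow> real" where "ci i u = max (a i) (min (a' i) u)"
definition ti :: "nat \<Rightarrow> real \<Rightarrow> real" where "ti i u = \<alpha> i * u + c i"
definition T :: "(real \<Rightarrow> real) \<Rightarrow> nat \<Rightarrow> real \<Rightarrow> real" where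
  "T \<phi> i u = (\<phi> (ti i (ci i u)) - \<phi> (ti i (a i))) / \<alpha> i - (\<phi> (ci i u) - \<phi> (a i))"
definition G :: "(real \<Rightarrow> real) \<Rightarrow> real \<Rightarrow> real" where
  "G \<phi> u = \<phi> (cl u) + (\<Sum>i\<in>{1..n}. T \<phi> i u)"
definition BB :: real where "BB = 2 * (real n + 1) + 2 * (\<Sum>i\<in>{1..n}. 1 / \<alpha> i)"

lemma cl01: "cl u \<in> {0..1}" unfolding cl_def by auto
lemma ci_in: "i \<in> {1..n} \<Longrightarrow> ci i u \<in> {a i..a' i}" unfolding ci_def using a_range[of i] by auto
lemma ci01: "i \<in> {1..n} \<Longrightarrow> ci i u \<in> {0..1}" using ci_in[of i u] a_range[of i] by auto
lemma ti_in: "i \<in> {1..n} \<Longrightarrow> x \<in> {a i..a' i} \<Longrightarrow> ti i x \<in> {a i..a' i}" unfolding ti_def using inv by auto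
lemma ti01: "i \<in> {1..n} \<Longrightarrow> x \<in> {a i..a' i} \<Longrightarrow> ti i x \<in> {0..1}" using ti_in[of i x] a_range[of i] by auto

lemma abs2: "\<bar>x\<bar> \<le> 1 \<Longrightarrow> \<bar>y\<bar> \<le> 1 \<Longrightarrow> \<bar>x - y\<bar> \<le> (2::real)" by arith

lemma T_osc:
  assumes b: "\<forall>x\<in>{0..1}. \<bar>\<phi> x\<bar> \<le> 1" and i: "i \<in> {1..n}"
  shows "\<bar>T \<phi> i x - T \<phi> i y\<bar> \<le> 2 / \<alpha> i + 2"
proof -
  have al: "\<alpha> i > 0" using alpha_pos i by auto
  have eq: "T \<phi> i x - T \<phi> i y = (\<phi> (ti i (ci i x)) - \<phi> (ti i (ci i y))) / \<alpha> i - (\<phi> (ci i x) - \<phi> (ci i y))"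
    unfolding T_def using al by (simp add: field_simps)
  have p1: "\<bar>\<phi> (ti i (ci i x)) - \<phi> (ti i (ci i y))\<bar> \<le> 2"
    using b ti01[OF i ci_in[OF i, of x]] ti01[OF i ci_in[OF i, of y]] by (intro abs2) auto
  have p2: "\<bar>\<phi> (ci i x) - \<phi> (ci i y)\<bar> \<le> 2"
    using b ci01[OF i, of x] ci01[OF i, of y] by (intro abs2) auto
  have "\<bar>(\<phi> (ti i (ci i x)) - \<phi> (ti i (ci i y))) / \<alpha> i\<bar> \<le> 2 / \<alpha> i"
    using p1 al by (simp add: abs_divide divide_right_mono)
  then show ?thesis unfolding eq using p2 by linarith
qed

lemma G_osc:
  assumes b: "\<forall>x\<in>{0..1}. \<bar>\<phi> x\<bar> \<le> 1"
  shows "\<bar>G \<phi> x - G \<phi> y\<bar> \<le> BB"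
proof -
  have eq: "G \<phi> x - G \<phi> y = (\<phi> (cl x) - \<phi> (cl y)) + (\<Sum>i\<in>{1..n}. T \<phi> i x - T \<phi> i y)"
    unfolding G_def by (simp only: sum_subtractf)
  have "\<bar>G \<phi> x - G \<phi> y\<bar> \<le> \<bar>\<phi> (cl x) - \<phi> (cl y)\<bar> + (\<Sum>i\<in>{1..n}. \<bar>T \<phi> i x - T \<phi> i y\<bar>)"
    unfolding eq
    by (rule order_trans[OF abs_triangle_ineq add_left_mono[OF sum_abs]])
  also have "\<dots> \<le> 2 + (\<Sum>i\<in>{1..n}. 2 / \<alpha> i + 2)"
  proof (rule add_mono)
    show "\<bar>\<phi> (cl x) - \<phi> (cl y)\<bar> \<le> 2" using b cl01[of x] cl01[of y] by (intro abs2) auto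
    show "(\<Sum>i\<in>{1..n}. \<bar>T \<phi> i x - T \<phi> i y\<bar>) \<le> (\<Sum>i\<in>{1..n}. 2 / \<alpha> i + 2)"
      by (rule sum_mono) (rule T_osc[OF b])
  qed
  also have "\<dots> = BB"
  proof -
    have "(\<Sum>i\<in>{1..n}. 2 / \<alpha> i + 2) = 2 * (\<Sum>i\<in>{1..n}. 1 / \<alpha> i) + 2 * real n"
      by (simp add: sum.distrib sum_distrib_left)
    then show ?thesis unfolding BB_def by simp
  qed
  finally show ?thesis .
qed

lemma C1_cont: "C1_01 \<phi> \<phi>' \<Longrightarrow> continuous_on {0..1} \<phi>"
  unfolding C1_01_def continuous_on_eq_continuous_within
  using DERIV_continuous by blast

lemma G_cont:
  assumes C: "C1_01 \<phi> \<phi>'"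
  shows "continuous_on UNIV (G \<phi>)"
proof -
  have pc: "continuous_on {0..1} \<phi>" by (rule C1_cont[OF C])
  have c1: "continuous_on UNIV (\<lambda>u. \<phi> (cl u))"
    by (rule continuous_on_compose2[OF pc]) (auto simp: cl_def cl01 intro!: continuous_intros)
  have c2: "continuous_on UNIV (\<lambda>u. T \<phi> i u)" if i: "i \<in> {1..n}" for i
  proof -
    have cc: "continuous_on UNIV (ci i)" unfolding ci_def by (intro continuous_intros)
    have a: "continuous_on UNIV (\<lambda>u. \<phi> (ci i u))"
      by (rule continuous_on_compose2[OF pc cc]) (use ci01[OF i] in auto)
    have b: "continuous_on UNIV (\<lambda>u. \<phi> (ti i (ci i u)))"
      by (rule continuous_on_compose2[OF pc]) (use ti01[OF i ci_in[OF i]] in \<open>auto simp: ti_def ci_def intro!: continuous_intros\<close>)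
    have "\<alpha> i \<noteq> 0" using alpha_pos i by fastforce
    then show ?thesis unfolding T_def by (intro continuous_intros a b) auto
  qed
  show ?thesis unfolding G_def by (intro continuous_intros c1 c2) auto
qed

lemma der_phi_int:
  assumes C: "C1_01 \<phi> \<phi>'" and u: "u \<in> {0<..<1}"
  shows "(\<phi> has_real_derivative \<phi>' u) (at u)"
proof -
  have "(\<phi> has_real_derivative \<phi>' u) (at u within {0..1})" using C u unfolding C1_01_def by auto
  moreover have "at u within {0..1} = at u" using u by (intro at_within_interior) simp
  ultimately show ?thesis by simp
qed

lemma der_cl:
  assumes C: "C1_01 \<phi> \<phi>'" and u: "u \<noteq> 0" "u \<noteq> 1"
  shows "((\<lambda>v. \<phi> (cl v)) has_real_derivative (if u \<in> {0..1} then \<phi>' u else 0)) (at u)"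
proof -
  consider "u < 0" | "u \<in> {0<..<1}" | "u > 1" using u by force
  then show ?thesis
  proof cases
    case 1
    have "((\<lambda>v. \<phi> 0) has_real_derivative 0) (at u)" by simp
    then have "((\<lambda>v. \<phi> (cl v)) has_real_derivative 0) (at u)"
      by (rule has_field_derivative_transform_within_open[where S="{..<0}"]) (use 1 in \<open>auto simp: cl_def\<close>)
    then show ?thesis using 1 by simp
  next
    case 2
    have "((\<lambda>v. \<phi> (cl v)) has_real_derivative \<phi>' u) (at u)"
      by (rule has_field_derivative_transform_within_open[OF der_phi_int[OF C 2], where S="{0<..<1}"])
         (use 2 in \<open>auto simp: cl_def\<close>)
    then show ?thesis using 2 by simp
  next
    case 3
    have "((\<lambda>v. \<phi> 1) has_real_derivative 0) (at u)" by simp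
    then have "((\<lambda>v. \<phi> (cl v)) has_real_derivative 0) (at u)"
      by (rule has_field_derivative_transform_within_open[where S="{1<..}"]) (use 3 in \<open>auto simp: cl_def\<close>)
    then show ?thesis using 3 by simp
  qed
qed

lemma der_T:
  assumes C: "C1_01 \<phi> \<phi>'" and i: "i \<in> {1..n}" and u: "u \<noteq> a i" "u \<noteq> a' i"
  shows "((\<lambda>v. T \<phi> i v) has_real_derivative (if u \<in> {a i<..<a' i} then \<phi>' (ti i u) - \<phi>' u else 0)) (at u)"
proof -
  have ar: "0 \<le> a i" "a i < a' i" "a' i \<le> 1" using a_range[OF i] by auto
  have al: "\<alpha> i \<noteq> 0" using alpha_pos i by fastforce
  consider "u < a i" | "u \<in> {a i<..<a' i}" | "u > a' i" using u by force
  then show ?thesis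
  proof cases
    case 1
    have "((\<lambda>v. 0) has_real_derivative 0) (at u)" by simp
    then have "((\<lambda>v. T \<phi> i v) has_real_derivative 0) (at u)"
      by (rule has_field_derivative_transform_within_open[where S="{..<a i}"])
         (use 1 ar in \<open>auto simp: T_def ci_def\<close>)
    then show ?thesis using 1 by simp
  next
    case 3
    have "((\<lambda>v. T \<phi> i (a' i)) has_real_derivative 0) (at u)" by simp
    then have "((\<lambda>v. T \<phi> i v) has_real_derivative 0) (at u)"
      by (rule has_field_derivative_transform_within_open[where S="{a' i<..}"])
         (use 3 ar in \<open>auto simp: T_def ci_def\<close>)
    then show ?thesis using 3 by simp
  next
    case 2
    define Oi where "Oi = {a i<..<a' i}"
    have O: "open Oi" "u \<in> Oi" unfolding Oi_def using 2 by auto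
    have tiu: "ti i u \<in> {0..1}" using ti01[OF i, of u] 2 by auto
    have d1: "(\<phi> has_real_derivative \<phi>' (ti i u)) (at (ti i u) within ti i ` Oi)"
    proof -
      have "(\<phi> has_real_derivative \<phi>' (ti i u)) (at (ti i u) within {0..1})"
        using C tiu unfolding C1_01_def by auto
      moreover have "ti i ` Oi \<subseteq> {0..1}" using ti01[OF i] unfolding Oi_def by auto
      ultimately show ?thesis by (rule DERIV_subset)
    qed
    have d2: "(ti i has_real_derivative \<alpha> i) (at u within Oi)"
      unfolding ti_def by (auto intro!: derivative_eq_intros)
    have "(\<phi> \<circ> ti i has_real_derivative \<phi>' (ti i u) * \<alpha> i) (at u within Oi)"
      by (rule DERIV_image_chain[OF d1 d2])
    then have d3: "((\<lambda>v. \<phi> (ti i v)) has_real_derivative \<phi>' (ti i u) * \<alpha> i) (at u)"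
      using at_within_open[OF O(2) O(1)] by (simp add: o_def)
    have u01: "u \<in> {0<..<1}" using 2 ar by auto
    have d4: "((\<lambda>v. (\<phi> (ti i v) - \<phi> (ti i (a i))) / \<alpha> i - (\<phi> v - \<phi> (a i))) has_real_derivative
         (\<phi>' (ti i u) * \<alpha> i - 0) / \<alpha> i - (\<phi>' u - 0)) (at u)"
      by (intro DERIV_diff DERIV_cdivide d3 der_phi_int[OF C u01] DERIV_const)
    have "((\<lambda>v. T \<phi> i v) has_real_derivative \<phi>' (ti i u) - \<phi>' u) (at u)"
      by (rule has_field_derivative_transform_within_open[OF DERIV_cong[OF d4], where S=Oi])
         (use al O in \<open>auto simp: T_def ci_def Oi_def\<close>)
    then show ?thesis using 2 by simp
  qed
qed

definition gp :: "(real \<Rightarrow> real) \<Rightarrow> real \<Rightarrow> real" where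
  "gp \<phi>' u = (if u \<in> {0..1} then \<phi>' (\<tau> u) else 0)"

lemma G_der:
  assumes C: "C1_01 \<phi> \<phi>'" and u: "u \<notin> S"
  shows "(G \<phi> has_real_derivative gp \<phi>' u) (at u)"
proof -
  have u0: "u \<noteq> 0" "u \<noteq> 1" using u unfolding S_def by auto
  have ua: "u \<noteq> a i" "u \<noteq> a' i" if "i \<in> {1..n}" for i using u that unfolding S_def by auto
  define dT where "dT i = (if u \<in> {a i<..<a' i} then \<phi>' (ti i u) - \<phi>' u else 0)" for i
  have "((\<lambda>v. \<phi> (cl v) + (\<Sum>i\<in>{1..n}. T \<phi> i v)) has_real_derivative
        (if u \<in> {0..1} then \<phi>' u else 0) + (\<Sum>i\<in>{1..n}. dT i)) (at u)"
    unfolding dT_def by (intro DERIV_add der_cl[OF C u0] DERIV_sum der_T[OF C] ua) auto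
  moreover have "(if u \<in> {0..1} then \<phi>' u else 0) + (\<Sum>i\<in>{1..n}. dT i) = gp \<phi>' u"
  proof (cases "\<exists>i\<in>{1..n}. u \<in> {a i<..<a' i}")
    case True
    then obtain i where i: "i \<in> {1..n}" "u \<in> {a i<..<a' i}" by blast
    have u01: "u \<in> {0..1}" using i a_range[OF i(1)] by auto
    have "(\<Sum>j\<in>{1..n}. dT j) = (\<Sum>j\<in>{1..n}. if j = i then \<phi>' (ti i u) - \<phi>' u else 0)"
    proof (rule sum.cong[OF refl])
      fix j assume j: "j \<in> {1..n}"
      show "dT j = (if j = i then \<phi>' (ti i u) - \<phi>' u else 0)"
      proof (cases "j = i")
        case True then show ?thesis using i(2) unfolding dT_def by simp
      next
        case False
        have "u \<notin> {a j<..<a' j}"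
        proof
          assume "u \<in> {a j<..<a' j}"
          then have "u \<in> {a j..a' j}" by auto
          from disj[OF i(1) j i(2) this] False show False by simp
        qed
        then show ?thesis using False unfolding dT_def by auto
      qed
    qed
    also have "\<dots> = \<phi>' (ti i u) - \<phi>' u" using i(1) by simp
    finally show ?thesis using u01 tau_int[OF i] unfolding gp_def ti_def by simp
  next
    case False
    then have "(\<Sum>j\<in>{1..n}. dT j) = 0" unfolding dT_def by (intro sum.neutral) auto
    moreover have "u \<in> {0..1} \<Longrightarrow> \<tau> u = u" using tau_out[OF _ u] False by blast
    ultimately show ?thesis unfolding gp_def by simp
  qed
  ultimately show ?thesis unfolding G_def by simp
qed

definition Hf :: "(real \<Rightarrow> real) \<Rightarrow> real \<Rightarrow> real" where
  "Hf \<phi> y = integral {-1..y} (G \<phi>)"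
definition Fd :: "(real \<Rightarrow> real) \<Rightarrow> real \<Rightarrow> real \<Rightarrow> real" where
  "Fd \<phi> d x = (Hf \<phi> (x + d) - Hf \<phi> x) / d"
definition Fd' :: "(real \<Rightarrow> real) \<Rightarrow> real \<Rightarrow> real \<Rightarrow> real" where
  "Fd' \<phi> d x = (G \<phi> (x + d) - G \<phi> x) / d"

lemma H_der:
  assumes C: "C1_01 \<phi> \<phi>'" and y: "y \<in> {-1<..<3}"
  shows "(Hf \<phi> has_real_derivative G \<phi> y) (at y)"
proof -
  have gc: "continuous_on {-1..3} (G \<phi>)" using G_cont[OF C] by (rule continuous_on_subset) simp
  have "((\<lambda>u. integral {-1..u} (G \<phi>)) has_vector_derivative G \<phi> y) (at y within {-1..3})"
    by (rule integral_has_vector_derivative[OF gc]) (use y in auto)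
  moreover have "at y within {-1..3} = at y" using y by (intro at_within_interior) simp
  ultimately show ?thesis unfolding Hf_def by (simp add: has_real_derivative_iff_has_vector_derivative)
qed

lemma Fd_C1:
  assumes C: "C1_01 \<phi> \<phi>'" and d: "0 < d" "d \<le> 1"
  shows "C1_01 (Fd \<phi> d) (Fd' \<phi> d)"
  unfolding C1_01_def
proof (intro conjI ballI)
  fix x :: real assume x: "x \<in> {0..1}"
  have h1: "(Hf \<phi> has_real_derivative G \<phi> (x + d)) (at (x + d))" using x d by (intro H_der[OF C]) auto
  have h2: "(Hf \<phi> has_real_derivative G \<phi> x) (at x)" using x d by (intro H_der[OF C]) auto
  have "((\<lambda>x. Hf \<phi> (x + d)) has_real_derivative G \<phi> (x + d)) (at x)" using h1 by (simp add: DERIV_shift)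
  then have "(Fd \<phi> d has_real_derivative Fd' \<phi> d x) (at x)" unfolding Fd_def Fd'_def
    by (intro DERIV_cdivide DERIV_diff h2)
  then show "(Fd \<phi> d has_real_derivative Fd' \<phi> d x) (at x within {0..1})"
    by (rule has_field_derivative_at_within)
next
  have "continuous_on UNIV (Fd' \<phi> d)" unfolding Fd'_def
    using G_cont[OF C] d by (intro continuous_intros continuous_on_compose2[OF G_cont[OF C]]) auto
  then show "continuous_on {0..1} (Fd' \<phi> d)" by (rule continuous_on_subset) simp
qed

lemma Fd_bound:
  assumes C: "C1_01 \<phi> \<phi>'" and d: "0 < d" "d \<le> 1" and c0: "\<And>t. \<bar>G \<phi> t - c0\<bar> \<le> BB/2"
    and x: "x \<in> {0..1}"
  shows "\<bar>Fd \<phi> d x - c0\<bar> \<le> BB/2"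
proof -
  have gc: "continuous_on UNIV (G \<phi>)" by (rule G_cont[OF C])
  have gi: "G \<phi> integrable_on {u..v}" for u v
    by (rule integrable_continuous_interval) (rule continuous_on_subset[OF gc], simp)
  have "Hf \<phi> (x + d) = Hf \<phi> x + integral {x..x+d} (G \<phi>)" unfolding Hf_def
    using Henstock_Kurzweil_Integration.integral_combine[of "-1" x "x+d" "G \<phi>"] x d gi by auto
  moreover have "integral {x..x+d} (\<lambda>t. G \<phi> t - c0) = integral {x..x+d} (G \<phi>) - d * c0"
  proof -
    have "integral {x..x+d} (\<lambda>t. G \<phi> t - c0) = integral {x..x+d} (G \<phi>) - integral {x..x+d} (\<lambda>t. c0)"
      by (rule Henstock_Kurzweil_Integration.integral_diff[OF gi]) auto
    then show ?thesis using d by (simp add: content_real)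
  qed
  ultimately have e1: "Fd \<phi> d x - c0 = integral {x..x+d} (\<lambda>t. G \<phi> t - c0) / d" unfolding Fd_def
    using d by (simp add: field_simps)
  have "norm (integral {x..x+d} (\<lambda>t. G \<phi> t - c0)) \<le> integral {x..x+d} (\<lambda>_. BB/2)"
    by (rule Henstock_Kurzweil_Integration.integral_norm_bound_integral)
       (use gi c0 in \<open>auto intro!: Henstock_Kurzweil_Integration.integrable_diff\<close>)
  also have "\<dots> = d * (BB/2)" using d by (simp add: content_real)
  finally have "\<bar>integral {x..x+d} (\<lambda>t. G \<phi> t - c0)\<bar> / d \<le> BB/2" using d
    by (simp add: divide_le_eq mult.commute)
  then show ?thesis unfolding e1 using d by (simp add: abs_divide)
qed

lemma phi'_bounded:
  assumes C: "C1_01 \<phi> \<phi>'"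
  obtains M where "M \<ge> 0" "\<And>u. u \<in> {0..1} \<Longrightarrow> \<bar>\<phi>' u\<bar> \<le> M"
proof -
  have "compact (\<phi>' ` {0..1})" using C unfolding C1_01_def by (intro compact_continuous_image) auto
  then obtain M where "M > 0" "\<forall>y\<in>\<phi>' ` {0..1}. norm y \<le> M" using compact_imp_bounded bounded_pos by blast
  then show ?thesis using that[of M] by auto
qed

lemma gp_bound: "(\<And>u. u \<in> {0..1} \<Longrightarrow> \<bar>\<phi>' u\<bar> \<le> M) \<Longrightarrow> M \<ge> 0 \<Longrightarrow> \<bar>gp \<phi>' u\<bar> \<le> M"
  unfolding gp_def using tau_range by auto

lemma Fd'_bound:
  assumes C: "C1_01 \<phi> \<phi>'" and d: "0 < d" and M: "\<And>u. u \<in> {0..1} \<Longrightarrow> \<bar>\<phi>' u\<bar> \<le> M" "M \<ge> 0"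
  shows "\<bar>Fd' \<phi> d x\<bar> \<le> M"
proof -
  have "(gp \<phi>' has_integral (G \<phi> (x + d) - G \<phi> x)) {x..x+d}"
  proof (rule fundamental_theorem_of_calculus_interior_strong[OF S_fin])
    show "x \<le> x + d" using d by simp
    show "(G \<phi> has_vector_derivative gp \<phi>' t) (at t)" if "t \<in> {x<..<x+d} - S" for t
      using G_der[OF C, of t] that by (simp add: has_real_derivative_iff_has_vector_derivative)
    show "continuous_on {x..x + d} (G \<phi>)" by (rule continuous_on_subset[OF G_cont[OF C]]) simp
  qed
  then have gi: "gp \<phi>' integrable_on {x..x+d}" and ge: "integral {x..x+d} (gp \<phi>') = G \<phi> (x + d) - G \<phi> x"
    by auto
  have "norm (integral {x..x+d} (gp \<phi>')) \<le> integral {x..x+d} (\<lambda>_. M)"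
    by (rule Henstock_Kurzweil_Integration.integral_norm_bound_integral[OF gi]) (use gp_bound[OF M] in auto)
  also have "\<dots> = d * M" using d by (simp add: content_real)
  finally have "\<bar>G \<phi> (x + d) - G \<phi> x\<bar> \<le> d * M" using ge by simp
  then show ?thesis unfolding Fd'_def using d by (simp add: abs_divide divide_le_eq mult.commute)
qed

lemma Fd'_lim:
  assumes C: "C1_01 \<phi> \<phi>'" and t: "t \<notin> S"
  shows "(\<lambda>k. Fd' \<phi> (1 / real (Suc k)) t) \<longlonglongrightarrow> gp \<phi>' t"
proof -
  have "(\<lambda>h. (G \<phi> (t + h) - G \<phi> t) / h) \<midarrow>0\<rightarrow> gp \<phi>' t"
    using G_der[OF C t] by (simp add: DERIV_def)
  moreover have "(\<lambda>k. 1 / real (Suc k)) \<longlonglongrightarrow> 0" using LIMSEQ_inverse_real_of_nat by (simp add: divide_inverse)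
  moreover have "eventually (\<lambda>k. 1 / real (Suc k) \<noteq> 0) sequentially" by simp
  ultimately show ?thesis unfolding Fd'_def by (rule tendsto_compose_eventually)
qed

end

context smu
begin

lemma intP_bdd: fixes f :: "real \<Rightarrow> real" and B :: real shows "f \<in> borel_measurable space01 \<Longrightarrow> (\<And>x. x \<in> {0..1} \<Longrightarrow> \<bar>f x\<bar> \<le> B) \<Longrightarrow> integrable P f"
  by (rule finite_measure.integrable_const_bound[OF fP _ , where B=B])
     (auto intro!: AE_I2 simp: measurable_cong_sets[OF sP refl])
lemma intN_bdd: fixes f :: "real \<Rightarrow> real" and B :: real shows "f \<in> borel_measurable space01 \<Longrightarrow> (\<And>x. x \<in> {0..1} \<Longrightarrow> \<bar>f x\<bar> \<le> B) \<Longrightarrow> integrable N f"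
  by (rule finite_measure.integrable_const_bound[OF fN _ , where B=B])
     (auto intro!: AE_I2 simp: measurable_cong_sets[OF sN refl])

lemma sint_diff:
  fixes f g :: "real \<Rightarrow> real"
  assumes "f \<in> borel_measurable space01" "\<And>x. x \<in> {0..1} \<Longrightarrow> \<bar>f x\<bar> \<le> B"
    "g \<in> borel_measurable space01" "\<And>x. x \<in> {0..1} \<Longrightarrow> \<bar>g x\<bar> \<le> B'"
  shows "sint (P,N) (\<lambda>x. f x - g x) = sint (P,N) f - sint (P,N) g"
  unfolding sint_def fst_conv snd_conv
  using intP_bdd[OF assms(1,2)] intP_bdd[OF assms(3,4)] intN_bdd[OF assms(1,2)] intN_bdd[OF assms(3,4)]
  by (simp add: Bochner_Integration.integral_diff)

lemma D4':
  fixes f :: "real \<Rightarrow> real"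
  assumes fm: "f \<in> borel_measurable space01" and fb: "\<And>x. x \<in> {0..1} \<Longrightarrow> \<bar>f x\<bar> \<le> Cb" and Cb: "Cb > 0"
  shows "\<bar>sint (P,N) f\<bar> \<le> K/2 * (LINT x:{0..1}|lborel. \<bar>f x\<bar>)"
proof -
  have "\<bar>sint (P,N) (\<lambda>x. f x / Cb)\<bar> \<le> K/2 * (LINT x:{0..1}|lborel. \<bar>f x / Cb\<bar>)"
    by (rule D4) (use fm fb Cb in auto)
  moreover have "sint (P,N) (\<lambda>x. f x / Cb) = sint (P,N) f / Cb" unfolding sint_def by (simp add: diff_divide_distrib)
  moreover have "(LINT x:{0..1}|lborel. \<bar>f x / Cb\<bar>) = (LINT x:{0..1}|lborel. \<bar>f x\<bar>) / Cb"
    unfolding set_lebesgue_integral_def using Cb by (simp add: abs_divide)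
  ultimately have "\<bar>sint (P,N) f\<bar> / Cb \<le> K/2 * (LINT x:{0..1}|lborel. \<bar>f x\<bar>) / Cb"
    using Cb by (simp add: abs_divide)
  then have r: "\<bar>sint (P,N) f\<bar> / Cb \<le> K/2 * (LINT x:{0..1}|lborel. \<bar>f x\<bar>) / Cb" .
  have "\<bar>sint (P,N) f\<bar> = (\<bar>sint (P,N) f\<bar> / Cb) * Cb" using Cb by simp
  also have "\<dots> \<le> (K/2 * (LINT x:{0..1}|lborel. \<bar>f x\<bar>) / Cb) * Cb"
    using r Cb by (intro mult_right_mono) auto
  also have "\<dots> = K/2 * (LINT x:{0..1}|lborel. \<bar>f x\<bar>)" using Cb by simp
  finally show ?thesis .
qed

lemma lint_meas:
  fixes f :: "real \<Rightarrow> real"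
  assumes "f \<in> borel_measurable space01"
  shows "(\<lambda>x. indicator {0..1} x *\<^sub>R \<bar>f x\<bar>) \<in> borel_measurable lborel"
proof -
  have "(\<lambda>x. \<bar>f x\<bar>) \<in> borel_measurable space01" using assms by (rule borel_measurable_abs)
  then show ?thesis unfolding space01_def
    by (subst (asm) borel_measurable_restrict_space_iff) auto
qed

end

locale both = smu P N K + tdata n a a' \<alpha> c \<tau> for P N K n a a' \<alpha> c \<tau>
begin

lemma gp_meas: "C1_01 \<phi> \<phi>' \<Longrightarrow> gp \<phi>' \<in> borel_measurable space01"
proof -
  assume C: "C1_01 \<phi> \<phi>'"
  have "\<phi>' \<in> borel_measurable space01" unfolding space01_def
    using C unfolding C1_01_def by (intro borel_measurable_continuous_on_restrict) auto
  then have m: "(\<lambda>x. \<phi>' (\<tau> x)) \<in> borel_measurable space01"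
    using measurable_compose[OF tau_meas] by blast
  show ?thesis by (rule measurable_cong[THEN iffD1, OF _ m]) (simp add: gp_def)
qed

lemma part1:
  assumes C: "C1_01 \<phi> \<phi>'" and b: "\<forall>x\<in>{0..1}. \<bar>\<phi> x\<bar> \<le> 1"
  shows "sint (P,N) (\<lambda>x. \<phi>' (\<tau> x)) \<le> BB/2 * K"
proof -
  obtain Mb where Mb: "Mb \<ge> 0" "\<And>u. u \<in> {0..1} \<Longrightarrow> \<bar>\<phi>' u\<bar> \<le> Mb" using phi'_bounded[OF C] by blast
  obtain c0 where c0: "\<forall>t\<in>UNIV. \<bar>G \<phi> t - c0\<bar> \<le> BB/2"
    using center[of UNIV "G \<phi>" BB] G_osc[OF b] by auto
  define d where "d k = 1 / real (Suc k)" for k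
  have d: "0 < d k" "d k \<le> 1" for k unfolding d_def by auto
  have gpm: "gp \<phi>' \<in> borel_measurable space01" by (rule gp_meas[OF C])
  have gpb: "\<bar>gp \<phi>' x\<bar> \<le> Mb" for x by (rule gp_bound[OF Mb(2,1)])
  have Fm: "Fd' \<phi> (d k) \<in> borel_measurable space01" for k
  proof -
    have "continuous_on UNIV (Fd' \<phi> (d k))" unfolding Fd'_def
      using G_cont[OF C] d(1)[of k] by (intro continuous_intros continuous_on_compose2[OF G_cont[OF C]]) auto
    then have "Fd' \<phi> (d k) \<in> borel_measurable borel" by (rule borel_measurable_continuous_onI)
    then show ?thesis unfolding space01_def by (rule measurable_restrict_space1)
  qed
  have Fb: "\<bar>Fd' \<phi> (d k) x\<bar> \<le> Mb" for k x by (rule Fd'_bound[OF C d(1) Mb(2,1)])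
  define h where "h k x = gp \<phi>' x - Fd' \<phi> (d k) x" for k x
  have hm: "h k \<in> borel_measurable space01" for k unfolding h_def using gpm Fm by simp
  have hb: "\<bar>h k x\<bar> \<le> 2 * Mb + 1" for k x unfolding h_def using gpb[of x] Fb[of k x] by linarith
  have s1: "sint (P,N) (Fd' \<phi> (d k)) \<le> BB/2 * K" for k
    by (rule S[OF Fd_C1[OF C d], where c=c0]) (use Fd_bound[OF C d, of c0] c0 in auto)
  have s2: "sint (P,N) (gp \<phi>') = sint (P,N) (Fd' \<phi> (d k)) + sint (P,N) (h k)" for k
    using sint_diff[OF gpm _ Fm, where B=Mb and B'=Mb] gpb Fb unfolding h_def by simp
  define e where "e k = (LINT x:{0..1}|lborel. \<bar>h k x\<bar>)" for k
  have s3: "sint (P,N) (gp \<phi>') \<le> BB/2 * K + K/2 * e k" for k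
    using s1[of k] s2[of k] D4'[OF hm, of k "2 * Mb + 1"] hb Mb unfolding e_def by force
  have e0: "e \<longlonglongrightarrow> 0"
  proof -
    define w where "w x = (2 * Mb + 1) * (indicator {0..1} x :: real)" for x :: real
    have m1: "(\<lambda>x. indicator {0..1} x *\<^sub>R \<bar>h k x\<bar>) \<in> borel_measurable lborel" for k by (rule lint_meas[OF hm])
    have m0: "(\<lambda>x::real. 0::real) \<in> borel_measurable lborel" by simp
    have iw: "integrable lborel w" unfolding w_def by simp
    have bd: "AE x in lborel. norm (indicator {0..1} x *\<^sub>R \<bar>h k x\<bar>) \<le> w x" for k
      using hb unfolding w_def by (intro AE_I2) (auto simp: indicator_def)
    have "AE x in lborel. \<forall>s\<in>S. x \<noteq> s" by (rule AE_finite_allI[OF S_fin]) (rule AE_lborel_singleton)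
    then have lm: "AE x in lborel. (\<lambda>k. indicator {0..1} x *\<^sub>R \<bar>h k x\<bar>) \<longlonglongrightarrow> 0"
    proof (rule AE_mp, intro AE_I2 impI)
      fix x assume "\<forall>s\<in>S. x \<noteq> s"
      then have xS: "x \<notin> S" by blast
      have "(\<lambda>k. indicator {0..1} x *\<^sub>R \<bar>gp \<phi>' x - Fd' \<phi> (d k) x\<bar>) \<longlonglongrightarrow> indicator {0..1} x *\<^sub>R \<bar>gp \<phi>' x - gp \<phi>' x\<bar>"
        using Fd'_lim[OF C xS] unfolding d_def by (intro tendsto_intros)
      then show "(\<lambda>k. indicator {0..1} x *\<^sub>R \<bar>h k x\<bar>) \<longlonglongrightarrow> 0" unfolding h_def by simp
    qed
    have "(\<lambda>k. integral\<^sup>L lborel (\<lambda>x. indicator {0..1} x *\<^sub>R \<bar>h k x\<bar>)) \<longlonglongrightarrow> integral\<^sup>L lborel (\<lambda>x::real. 0::real)"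
      by (rule integral_dominated_convergence[OF m0 m1 iw lm bd])
    then show ?thesis unfolding e_def set_lebesgue_integral_def by simp
  qed
  have "sint (P,N) (gp \<phi>') \<le> BB/2 * K + K/2 * 0"
    by (rule tendsto_le[OF sequentially_bot tendsto_add[OF tendsto_const tendsto_mult_left[OF e0]] tendsto_const])
       (use s3 in auto)
  moreover have "sint (P,N) (\<lambda>x. \<phi>' (\<tau> x)) = sint (P,N) (gp \<phi>')"
    unfolding sint_def fst_conv snd_conv gp_def
    by (intro arg_cong2[where f=minus] Bochner_Integration.integral_cong) auto
  ultimately show ?thesis by simp
qed

lemma part2:
  fixes \<psi> :: "real \<Rightarrow> real"
  assumes \<psi>m: "\<psi> \<in> borel_measurable space01" and \<psi>b: "\<forall>x\<in>{0..1}. \<bar>\<psi> x\<bar> \<le> 1"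
  shows "\<bar>sint (P,N) (\<lambda>x. \<psi> x - \<psi> (\<tau> x))\<bar> \<le> K * measure lborel (\<Union>i\<in>{1..n}. {a i..a' i})"
proof -
  define A where "A = (\<Union>i\<in>{1..n}. {a i..a' i})"
  define h where "h x = \<psi> x - \<psi> (\<tau> x)" for x
  have hm: "h \<in> borel_measurable space01" unfolding h_def
    using \<psi>m measurable_compose[OF tau_meas \<psi>m] by simp
  have hb: "\<bar>h x\<bar> \<le> 2" if "x \<in> {0..1}" for x
    using \<psi>b that tau_range[OF that] unfolding h_def by (intro abs2[THEN order_trans]) auto
  have h0: "h x = 0" if "x \<in> {0..1}" "x \<notin> A" for x using tau_id that unfolding h_def A_def by auto
  have D: "\<bar>sint (P,N) h\<bar> \<le> K/2 * (LINT x:{0..1}|lborel. \<bar>h x\<bar>)"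
    using D4'[OF hm hb] by force
  have Ab: "A \<in> sets borel" unfolding A_def by auto
  have A01: "A \<subseteq> {0..1}" unfolding A_def using a_range by fastforce
  have Af: "emeasure lborel A < \<infinity>"
  proof -
    have "emeasure lborel A \<le> emeasure lborel {0..1::real}" using A01 Ab by (intro emeasure_mono) auto
    then show ?thesis by (simp add: le_less_trans)
  qed
  have iA: "integrable lborel (\<lambda>x. 2 * (indicator A x :: real))"
    using Ab Af by (intro integrable_mult_right integrable_real_indicator) auto
  have i01: "integrable lborel (\<lambda>x. 2 * (indicator {0..1::real} x :: real))" by simp
  have ih: "integrable lborel (\<lambda>x. indicator {0..1} x *\<^sub>R \<bar>h x\<bar>)"
    by (rule Bochner_Integration.integrable_bound[OF i01 lint_meas[OF hm]])
       (use hb in \<open>auto simp: indicator_def intro!: AE_I2\<close>)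
  have "(LINT x:{0..1}|lborel. \<bar>h x\<bar>) \<le> integral\<^sup>L lborel (\<lambda>x. 2 * (indicator A x :: real))"
    unfolding set_lebesgue_integral_def
  proof (rule integral_mono[OF ih iA])
    fix x :: real
    show "indicator {0..1} x *\<^sub>R \<bar>h x\<bar> \<le> 2 * indicator A x"
    proof (cases "x \<in> {0..1}")
      case True then show ?thesis using hb[OF True] h0[OF True] by (cases "x \<in> A") auto
    qed simp
  qed
  also have "\<dots> = 2 * measure lborel A" using Ab by (simp add: Int_absorb2)
  finally have L: "(LINT x:{0..1}|lborel. \<bar>h x\<bar>) \<le> 2 * measure lborel A" .
  have "K/2 * (LINT x:{0..1}|lborel. \<bar>h x\<bar>) \<le> K/2 * (2 * measure lborel A)"
    using L K_nonneg by (intro mult_left_mono) auto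
  then show ?thesis using D unfolding h_def A_def by simp
qed

end



theorem lemma6:
  fixes n :: nat and a a' \<alpha> c :: "nat \<Rightarrow> real" and \<tau> :: "real \<Rightarrow> real"
    and \<mu> :: "real measure \<times> real measure"
  assumes n: "n \<ge> 1"
    and a0: "0 \<le> a 1"
    and aa': "\<forall>i\<in>{1..n}. a i < a' i"
    and a'a: "\<forall>i\<in>{1..<n}. a' i \<le> a (Suc i)"
    and a1: "a' n \<le> 1"
    and alpha_pos: "\<forall>i\<in>{1..n}. \<alpha> i > 0"
    and tau_A: "\<forall>x\<in>{0..1}. x \<in> (\<Union>i\<in>{1..n}. {a i..a' i}) \<longrightarrow>
                   (\<exists>i\<in>{1..n}. x \<in> {a i..a' i} \<and> \<tau> x = \<alpha> i * x + c i)"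
    and tau_id: "\<forall>x\<in>{0..1}. x \<notin> (\<Union>i\<in>{1..n}. {a i..a' i}) \<longrightarrow> \<tau> x = x"
    and inv: "\<forall>i\<in>{1..n}. \<forall>x\<in>{a i..a' i}. \<alpha> i * x + c i \<in> {a i..a' i}"
    and mu: "signed_meas \<mu>"
  shows "strong_norm (push \<tau> \<mu>) \<le> ereal (real n + 1 + (\<Sum>i=1..n. 1 / \<alpha> i)) * strong_norm \<mu>
       \<and> weak_norm_fun (\<lambda>\<phi>. sint \<mu> \<phi> - sint (push \<tau> \<mu>) \<phi>)
           \<le> ereal ((real n + 2 + (\<Sum>i=1..n. 1 / \<alpha> i)) / 2
                    * measure lborel (\<Union>i\<in>{1..n}. {a i..a' i})) * strong_norm \<mu>"
proof -
  interpret T: tdata n a a' \<alpha> c \<tau> by unfold_locales (fact assms)+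
  obtain P N where PN: "\<mu> = (P, N)" by (cases \<mu>)
  have sP: "sets P = sets space01" and sN: "sets N = sets space01"
    and fP: "finite_measure P" and fN: "finite_measure N"
    using mu unfolding PN signed_meas_def by auto
  define A where "A = (\<Union>i\<in>{1..n}. {a i..a' i})"
  define C1 where "C1 = real n + 1 + (\<Sum>i=1..n. 1 / \<alpha> i)"
  define C2 where "C2 = (real n + 2 + (\<Sum>i=1..n. 1 / \<alpha> i)) / 2"
  have ap: "\<alpha> i > 0" if "i \<in> {1..n}" for i using alpha_pos that by blast
  have sum0: "(\<Sum>i=1..n. 1 / \<alpha> i) \<ge> 0"
  proof (rule sum_nonneg)
    fix i assume "i \<in> {1..n}" then show "0 \<le> 1 / \<alpha> i" using ap[of i] by simp
  qed
  have C1p: "C1 > 0" unfolding C1_def using sum0 by simp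
  have C2: "C2 \<ge> 1" unfolding C2_def using sum0 n by simp
  have Ab: "A \<in> sets borel" unfolding A_def by auto
  have A01: "A \<subseteq> {0..1}" unfolding A_def using T.a_range by fastforce
  have Af: "A \<in> fmeasurable lborel"
  proof -
    have "emeasure lborel A \<le> emeasure lborel {0..1::real}" using A01 Ab by (intro emeasure_mono) auto
    then show ?thesis using Ab by (auto simp: fmeasurable_def le_less_trans)
  qed
  have mA: "measure lborel A > 0"
  proof -
    have 1: "1 \<in> {1..n}" using n by simp
    have "{a 1..a' 1} \<subseteq> A" unfolding A_def using 1 by blast
    then have "measure lborel {a 1..a' 1} \<le> measure lborel A"
      by (intro measure_mono_fmeasurable[OF _ _ Af]) auto
    moreover have "a 1 < a' 1" using aa' 1 by blast
    then have "measure lborel {a 1..a' 1} > 0" by simp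
    ultimately show ?thesis by simp
  qed
  have SN0: "strong_norm \<mu> \<ge> 0"
  proof -
    have "C1_01 (\<lambda>_. 0) (\<lambda>_. 0)" unfolding C1_01_def by auto
    then have "ereal (sint \<mu> (\<lambda>_. 0)) \<le> strong_norm \<mu>"
      unfolding strong_norm_def strong_norm_fun_def by (intro Sup_upper) force
    then show ?thesis by (simp add: sint_def zero_ereal_def)
  qed
  show ?thesis
  proof (cases "strong_norm \<mu>")
    case PInf
    have e1: "ereal C1 * strong_norm \<mu> = \<infinity>" using PInf C1p by simp
    have g1: "strong_norm (push \<tau> \<mu>) \<le> ereal C1 * strong_norm \<mu>" unfolding e1 by simp
    have e2: "ereal (C2 * measure lborel A) * strong_norm \<mu> = \<infinity>" using PInf C2 mA by simp
    have g2: "weak_norm_fun (\<lambda>\<phi>. sint \<mu> \<phi> - sint (push \<tau> \<mu>) \<phi>) \<le> ereal (C2 * measure lborel A) * strong_norm \<mu>"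
      unfolding e2 by simp
    show ?thesis using g1 g2 unfolding C1_def C2_def A_def by (rule conjI)
  next
    case MInf then show ?thesis using SN0 by simp
  next
    case (real K)
    have "strong_norm (P, N) = ereal K" using real PN by simp
    then interpret S: smu P N K by (rule smu.intro[OF sP sN fP fN])
    interpret B: both P N K n a a' \<alpha> c \<tau> by intro_locales
    have K0: "K \<ge> 0" by (rule S.K_nonneg)
    have tm: "\<tau> \<in> measurable P space01" "\<tau> \<in> measurable N space01"
      using T.tau_meas measurable_cong_sets[OF sP refl] measurable_cong_sets[OF sN refl] by auto
    have push_eq: "sint (push \<tau> \<mu>) f = sint \<mu> (\<lambda>x. f (\<tau> x))" if "f \<in> borel_measurable space01" for f
      unfolding PN push_def sint_def fst_conv snd_conv
      using integral_distr[OF tm(1) that] integral_distr[OF tm(2) that] by simp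
    have BB: "T.BB / 2 = C1" unfolding T.BB_def C1_def by simp
    have part1: "strong_norm (push \<tau> \<mu>) \<le> ereal C1 * strong_norm \<mu>"
    proof -
      have "strong_norm (push \<tau> \<mu>) \<le> ereal (C1 * K)"
        unfolding strong_norm_def strong_norm_fun_def
      proof (rule Sup_least, clarify)
        fix \<phi> \<phi>' assume C: "C1_01 \<phi> \<phi>'" and b: "\<forall>x\<in>{0..1}. \<bar>\<phi> x\<bar> \<le> 1"
        have "\<phi>' \<in> borel_measurable space01" unfolding space01_def
          using C unfolding C1_01_def by (intro borel_measurable_continuous_on_restrict) auto
        then have "sint (push \<tau> \<mu>) \<phi>' = sint (P,N) (\<lambda>x. \<phi>' (\<tau> x))" using push_eq PN by simp
        also have "\<dots> \<le> T.BB/2 * K" by (rule B.part1[OF C b])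
        finally show "ereal (sint (push \<tau> \<mu>) \<phi>') \<le> ereal (C1 * K)" using BB by simp
      qed
      then show ?thesis using real by simp
    qed
    have part2: "weak_norm_fun (\<lambda>\<phi>. sint \<mu> \<phi> - sint (push \<tau> \<mu>) \<phi>) \<le> ereal (C2 * measure lborel A) * strong_norm \<mu>"
    proof -
      have "weak_norm_fun (\<lambda>\<phi>. sint \<mu> \<phi> - sint (push \<tau> \<mu>) \<phi>) \<le> ereal (C2 * measure lborel A * K)"
        unfolding weak_norm_fun_def
      proof (rule Sup_least, clarify)
        fix \<psi> :: "real \<Rightarrow> real" assume m: "\<psi> \<in> borel_measurable space01" and b: "\<forall>x\<in>{0..1}. \<bar>\<psi> x\<bar> \<le> 1"
        have m2: "(\<lambda>x. \<psi> (\<tau> x)) \<in> borel_measurable space01" using measurable_compose[OF T.tau_meas m] by simp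
        have b2: "\<bar>\<psi> (\<tau> x)\<bar> \<le> 1" if "x \<in> {0..1}" for x using b T.tau_range[OF that] by auto
        have "sint \<mu> \<psi> - sint (push \<tau> \<mu>) \<psi> = sint (P,N) (\<lambda>x. \<psi> x - \<psi> (\<tau> x))"
          using push_eq[OF m] S.sint_diff[OF m _ m2 b2, where B=1] b PN by simp
        also have "\<dots> \<le> K * measure lborel A" using B.part2[OF m b] unfolding A_def by simp
        also have "\<dots> \<le> C2 * measure lborel A * K"
        proof -
          have "1 * measure lborel A \<le> C2 * measure lborel A" using C2 mA by (intro mult_right_mono) auto
          then have "K * measure lborel A \<le> K * (C2 * measure lborel A)" using K0 by (intro mult_left_mono) auto
          then show ?thesis by (simp add: mult_ac)
        qed
        finally show "ereal (sint \<mu> \<psi> - sint (push \<tau> \<mu>) \<psi>) \<le> ereal (C2 * measure lborel A * K)" by simp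
      qed
      then show ?thesis using real by simp
    qed
    show ?thesis using part1 part2 unfolding C1_def C2_def A_def by (rule conjI)
  qed
qed


end
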